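(* Let $\Gamma$ be an inseparable weighted oriented graph with $n\geq 5$ vertices. Then there is a vertex $v$ of $\Gamma$ such that the induced weighted oriented graph $\Gamma[V\setminus\{v\}]$ on $n-1$ vertices is inseparable.
   Context: A weighted oriented graph $\Gamma$ with finite vertex set $V$ consists of a set of arcs, i.e. ordered pairs $(x,y)$ of distinct vertices, such that for any distinct $x,y$ at most one of $(x,y),(y,x)$ is an arc, each arc carrying a weight in $(1/2,1]$. For $Z\subseteq V$, $\Gamma[Z]$ is the induced weighted oriented graph on $Z$. A clan of $\Gamma$ is a subset $X\subseteq V$ such that for every $x\in V\setminus X$, one of the following holds: there is no arc between $x$ and any vertex of $X$; or for some weight $\alpha$, $(x,y)$ is an arc of weight $\alpha$ for all $y\in X$; or for some weight $\alpha$, $(y,x)$ is an arc of weight $\alpha$ for all $y\in X$. $\Gamma$ is separable if $V$ can be partitioned into two nonempty clans, and inseparable otherwise. *)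

theory Defs
  imports Main "HOL.Real"
begin

text \<open>A weighted oriented graph on vertex set V is encoded by a weight function
  w :: 'a => 'a => real, where (x,y) is an arc iff w x y \<noteq> 0, and then w x y is its weight.\<close>

definition wog :: "'a set \<Rightarrow> ('a \<Rightarrow> 'a \<Rightarrow> real) \<Rightarrow> bool" where
  "wog V w \<longleftrightarrow> finite V \<and>
     (\<forall>x y. w x y \<noteq> 0 \<longrightarrow> x \<in> V \<and> y \<in> V \<and> x \<noteq> y \<and> 1/2 < w x y \<and> w x y \<le> 1 \<and> w y x = 0)"

definition induced :: "'a set \<Rightarrow> ('a \<Rightarrow> 'a \<Rightarrow> real) \<Rightarrow> ('a \<Rightarrow> 'a \<Rightarrow> real)" where
  "induced Z w = (\<lambda>x y. if x \<in> Z \<and> y \<in> Z then w x y else 0)"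

definition clan :: "'a set \<Rightarrow> ('a \<Rightarrow> 'a \<Rightarrow> real) \<Rightarrow> 'a set \<Rightarrow> bool" where
  "clan V w X \<longleftrightarrow> X \<subseteq> V \<and>
     (\<forall>x \<in> V - X.
        (\<forall>y \<in> X. w x y = 0 \<and> w y x = 0) \<or>
        (\<exists>\<alpha>. \<alpha> \<noteq> 0 \<and> (\<forall>y \<in> X. w x y = \<alpha>)) \<or>
        (\<exists>\<alpha>. \<alpha> \<noteq> 0 \<and> (\<forall>y \<in> X. w y x = \<alpha>)))"

definition separable :: "'a set \<Rightarrow> ('a \<Rightarrow> 'a \<Rightarrow> real) \<Rightarrow> bool" where
  "separable V w \<longleftrightarrow> (\<exists>X Y. X \<noteq> {} \<and> Y \<noteq> {} \<and> X \<inter> Y = {} \<and> X \<union> Y = V \<and>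
                         clan V w X \<and> clan V w Y)"

definition inseparable :: "'a set \<Rightarrow> ('a \<Rightarrow> 'a \<Rightarrow> real) \<Rightarrow> bool" where
  "inseparable V w \<longleftrightarrow> \<not> separable V w"

end

theory Submission
  imports Defs
begin

definition hom :: "('a \<Rightarrow> 'a \<Rightarrow> real) \<Rightarrow> 'a set \<Rightarrow> 'a set \<Rightarrow> bool" where
  "hom w X Y \<longleftrightarrow> (\<exists>a b. \<forall>x\<in>X. \<forall>y\<in>Y. w x y = a \<and> w y x = b)"

definition sp :: "('a \<Rightarrow> 'a \<Rightarrow> real) \<Rightarrow> 'a set \<Rightarrow> bool" where
  "sp w Z \<longleftrightarrow> (\<exists>X. X \<subseteq> Z \<and> X \<noteq> {} \<and> Z - X \<noteq> {} \<and> hom w X (Z - X))"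

lemma sp_pairs:
  assumes "sp w Z"
  obtains X where "X \<subseteq> Z" "X \<noteq> {}" "Z - X \<noteq> {}"
    "\<And>u t u' t'. u \<in> Z \<Longrightarrow> t \<in> Z \<Longrightarrow> u' \<in> Z \<Longrightarrow> t' \<in> Z \<Longrightarrow>
       (u \<in> X \<longleftrightarrow> u' \<in> X) \<Longrightarrow> (t \<in> X \<longleftrightarrow> t' \<in> X) \<Longrightarrow> (u \<in> X \<longleftrightarrow> t \<notin> X) \<Longrightarrow>
       w u t = w u' t' \<and> w t u = w t' u'"
proof -
  obtain X p q where X: "X \<subseteq> Z" "X \<noteq> {}" "Z - X \<noteq> {}"
    and H: "\<And>x y. x \<in> X \<Longrightarrow> y \<in> Z - X \<Longrightarrow> w x y = p \<and> w y x = q"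
    using assms unfolding sp_def hom_def by blast
  have "w u t = w u' t' \<and> w t u = w t' u'"
    if "u \<in> Z" "t \<in> Z" "u' \<in> Z" "t' \<in> Z" "(u \<in> X \<longleftrightarrow> u' \<in> X)" "(t \<in> X \<longleftrightarrow> t' \<in> X)"
      "(u \<in> X \<longleftrightarrow> t \<notin> X)" for u t u' t'
  proof (cases "u \<in> X")
    case True
    then show ?thesis using H[of u t] H[of u' t'] that by simp
  next
    case False
    then show ?thesis using H[of t u] H[of t' u'] that by simp
  qed
  then show ?thesis using X that by blast
qed

lemma triple_insep:
  assumes "a \<noteq> b" "a \<noteq> d" "b \<noteq> d"
    and f1: "\<not> (w a b = w a d \<and> w b a = w d a)"
    and f2: "\<not> (w b a = w b d \<and> w a b = w d b)"
    and f3: "\<not> (w d a = w d b \<and> w a d = w b d)"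
  shows "\<not> sp w {a,b,d}"
proof
  assume "sp w {a,b,d}"
  then obtain X where X: "X \<subseteq> {a,b,d}" "X \<noteq> {}" "{a,b,d} - X \<noteq> {}"
    and K: "\<And>u t u' t'. u \<in> {a,b,d} \<Longrightarrow> t \<in> {a,b,d} \<Longrightarrow> u' \<in> {a,b,d} \<Longrightarrow> t' \<in> {a,b,d} \<Longrightarrow>
       (u \<in> X \<longleftrightarrow> u' \<in> X) \<Longrightarrow> (t \<in> X \<longleftrightarrow> t' \<in> X) \<Longrightarrow> (u \<in> X \<longleftrightarrow> t \<notin> X) \<Longrightarrow>
       w u t = w u' t' \<and> w t u = w t' u'"
    by (rule sp_pairs) blast
  have c1: "\<not> ((b \<in> X \<longleftrightarrow> d \<in> X) \<and> (a \<in> X \<longleftrightarrow> b \<notin> X))" using K[of a b a d] f1 by auto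
  have c2: "\<not> ((a \<in> X \<longleftrightarrow> d \<in> X) \<and> (b \<in> X \<longleftrightarrow> a \<notin> X))" using K[of b a b d] f2 by auto
  have c3: "\<not> ((a \<in> X \<longleftrightarrow> b \<in> X) \<and> (d \<in> X \<longleftrightarrow> a \<notin> X))" using K[of d a d b] f3 by auto
  have ne: "a \<in> X \<or> b \<in> X \<or> d \<in> X" using X by blast
  have nall: "a \<notin> X \<or> b \<notin> X \<or> d \<notin> X" using X by blast
  show False using c1 c2 c3 ne nall by blast
qed

lemma four_insep:
  assumes d: "a \<noteq> b" "a \<noteq> d" "a \<noteq> e" "b \<noteq> d" "b \<noteq> e" "d \<noteq> e"
    and f1: "\<not> (w a b = w a d \<and> w b a = w d a)"
    and f2: "\<not> (w b a = w b d \<and> w a b = w d b)"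
    and f3: "\<not> (w d a = w d e \<and> w a d = w e d)"
    and f4: "\<not> (w e b = w e a \<and> w b e = w a e)"
    and f6: "\<not> (w a b = w d b \<and> w b a = w b d)"
    and f58: "\<not> (w b d = w b e \<and> w d b = w e b) \<or> \<not> (w a e = w a d \<and> w e a = w d a)"
  shows "\<not> sp w {a,b,d,e}"
proof
  assume "sp w {a,b,d,e}"
  then obtain X where X: "X \<subseteq> {a,b,d,e}" "X \<noteq> {}" "{a,b,d,e} - X \<noteq> {}"
    and K: "\<And>u t u' t'. u \<in> {a,b,d,e} \<Longrightarrow> t \<in> {a,b,d,e} \<Longrightarrow> u' \<in> {a,b,d,e} \<Longrightarrow> t' \<in> {a,b,d,e} \<Longrightarrow>
       (u \<in> X \<longleftrightarrow> u' \<in> X) \<Longrightarrow> (t \<in> X \<longleftrightarrow> t' \<in> X) \<Longrightarrow> (u \<in> X \<longleftrightarrow> t \<notin> X) \<Longrightarrow>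
       w u t = w u' t' \<and> w t u = w t' u'"
    by (rule sp_pairs) blast
  have c1: "\<not> ((b \<in> X \<longleftrightarrow> d \<in> X) \<and> (a \<in> X \<longleftrightarrow> b \<notin> X))" using K[of a b a d] f1 by auto
  have c2: "\<not> ((a \<in> X \<longleftrightarrow> d \<in> X) \<and> (b \<in> X \<longleftrightarrow> a \<notin> X))" using K[of b a b d] f2 by auto
  have c3: "\<not> ((a \<in> X \<longleftrightarrow> e \<in> X) \<and> (d \<in> X \<longleftrightarrow> a \<notin> X))" using K[of d a d e] f3 by auto
  have c4: "\<not> ((b \<in> X \<longleftrightarrow> a \<in> X) \<and> (e \<in> X \<longleftrightarrow> b \<notin> X))" using K[of e b e a] f4 by auto
  have c6: "\<not> ((a \<in> X \<longleftrightarrow> d \<in> X) \<and> (a \<in> X \<longleftrightarrow> b \<notin> X))" using K[of a b d b] f6 by auto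
  have c5: "\<not> (w b d = w b e \<and> w d b = w e b) \<Longrightarrow> \<not> ((d \<in> X \<longleftrightarrow> e \<in> X) \<and> (b \<in> X \<longleftrightarrow> d \<notin> X))"
    using K[of b d b e] by auto
  have c8: "\<not> (w a e = w a d \<and> w e a = w d a) \<Longrightarrow> \<not> ((e \<in> X \<longleftrightarrow> d \<in> X) \<and> (a \<in> X \<longleftrightarrow> e \<notin> X))"
    using K[of a e a d] by auto
  have c58: "\<not> ((d \<in> X \<longleftrightarrow> e \<in> X) \<and> (b \<in> X \<longleftrightarrow> d \<notin> X)) \<or> \<not> ((e \<in> X \<longleftrightarrow> d \<in> X) \<and> (a \<in> X \<longleftrightarrow> e \<notin> X))"
    using f58 c5 c8 by blast
  have ne: "a \<in> X \<or> b \<in> X \<or> d \<in> X \<or> e \<in> X" using X by blast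
  have nall: "a \<notin> X \<or> b \<notin> X \<or> d \<notin> X \<or> e \<notin> X" using X by blast
  show False using c1 c2 c3 c4 c6 c58 ne nall by blast
qed

lemma sp_intro: "hom w X (Z - X) \<Longrightarrow> X \<subseteq> Z \<Longrightarrow> X \<noteq> {} \<Longrightarrow> Z - X \<noteq> {} \<Longrightarrow> sp w Z"
  unfolding sp_def by blast

lemma clan_good:
  assumes nsp: "\<not> sp w V" and SV: "S \<subseteq> V" "S \<noteq> V"
    and md: "\<And>y s1 s2. y \<in> V - S \<Longrightarrow> s1 \<in> S \<Longrightarrow> s2 \<in> S \<Longrightarrow> w y s1 = w y s2 \<and> w s1 y = w s2 y"
    and s: "s \<in> S" and s': "s' \<in> S" "s' \<noteq> s"
  shows "\<not> sp w (V - {s})"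
proof
  assume "sp w (V - {s})"
  then obtain X a b where X: "X \<subseteq> V - {s}" "X \<noteq> {}" "V - {s} - X \<noteq> {}"
    and H: "\<And>x y. x \<in> X \<Longrightarrow> y \<in> V - {s} - X \<Longrightarrow> w x y = a \<and> w y x = b"
    unfolding sp_def hom_def by blast
  define Y where "Y = V - {s} - X"
  have HY: "\<And>x y. x \<in> X \<Longrightarrow> y \<in> Y \<Longrightarrow> w x y = a \<and> w y x = b" using H Y_def by blast
  have "S - {s} \<subseteq> X \<or> S - {s} \<subseteq> Y \<or> (\<exists>a' b'. a' \<in> S - {s} \<and> a' \<in> X \<and> b' \<in> S - {s} \<and> b' \<in> Y)"
    using SV X Y_def by blast
  moreover have False if A: "S - {s} \<subseteq> X"
  proof -
    have "hom w (insert s X) (V - insert s X)"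
      unfolding hom_def
    proof (intro exI ballI)
      fix x y assume x: "x \<in> insert s X" and y: "y \<in> V - insert s X"
      have yY: "y \<in> Y" using y Y_def by blast
      have yS: "y \<in> V - S" using y A by blast
      show "w x y = a \<and> w y x = b"
      proof (cases "x = s")
        case True
        have "w y s = w y s' \<and> w s y = w s' y" using md[OF yS s s'(1)] .
        moreover have "w s' y = a \<and> w y s' = b" using HY[OF _ yY] A s' by blast
        ultimately show ?thesis using True by simp
      next
        case False
        then show ?thesis using HY[OF _ yY] x by blast
      qed
    qed
    moreover have "insert s X \<subseteq> V" "insert s X \<noteq> {}" "V - insert s X \<noteq> {}"
      using X SV s by blast+
    ultimately have "sp w V" by (metis sp_intro)
    then show False using nsp by blast
  qed
  moreover have False if B: "S - {s} \<subseteq> Y"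
  proof -
    have "hom w X (V - X)"
      unfolding hom_def
    proof (intro exI ballI)
      fix x y assume x: "x \<in> X" and y: "y \<in> V - X"
      show "w x y = a \<and> w y x = b"
      proof (cases "y = s")
        case True
        have xS: "x \<in> V - S" using x B X Y_def by blast
        have "w x s = w x s' \<and> w s x = w s' x" using md[OF xS s s'(1)] .
        moreover have "w x s' = a \<and> w s' x = b" using HY[OF x] B s' by blast
        ultimately show ?thesis using True by simp
      next
        case False
        then show ?thesis using HY[OF x] y Y_def by blast
      qed
    qed
    moreover have "X \<subseteq> V" "X \<noteq> {}" "V - X \<noteq> {}"
      using X SV s by blast+
    ultimately have "sp w V" by (metis sp_intro)
    then show False using nsp by blast
  qed
  moreover have False if C: "a' \<in> S - {s}" "a' \<in> X" "b' \<in> S - {s}" "b' \<in> Y" for a' b'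
  proof (cases "Y - S = {}")
    case False
    have YV: "Y \<subseteq> V" unfolding Y_def by blast
    have hm: "hom w (V - (Y - S)) (Y - S)"
      unfolding hom_def
    proof (intro exI ballI)
      fix x y assume x: "x \<in> V - (Y - S)" and y: "y \<in> Y - S"
      have yY: "y \<in> Y" using y by simp
      have yS: "y \<in> V - S" using y YV by auto
      show "w x y = a \<and> w y x = b"
      proof (cases "x \<in> S")
        case True
        have aS: "a' \<in> S" using C(1) by simp
        have "w y x = w y a' \<and> w x y = w a' y" using md[OF yS True aS] by simp
        moreover have "w a' y = a \<and> w y a' = b" using HY[OF C(2) yY] .
        ultimately show ?thesis by simp
      next
        case False
        have "x \<noteq> s" using False s by auto
        moreover have "x \<in> V" "x \<notin> Y" using x False by auto
        ultimately have "x \<in> X" unfolding Y_def by auto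
        then show ?thesis using HY[OF _ yY] by simp
      qed
    qed
    have eq: "V - (V - (Y - S)) = Y - S" using YV by auto
    have ne1: "V - (Y - S) \<noteq> {}" using s SV by auto
    have "sp w V" using sp_intro[of w "V - (Y - S)" V] hm eq ne1 False by auto
    then show False using nsp by blast
  next
    case True
    have hm: "hom w (V - S) S"
      unfolding hom_def
    proof (intro exI ballI)
      fix x y assume x: "x \<in> V - S" and yS: "y \<in> S"
      have "x \<noteq> s" "x \<in> V" "x \<notin> Y" using x True s by auto
      then have xX: "x \<in> X" unfolding Y_def by auto
      have bS: "b' \<in> S" using C(3) by simp
      have "w x y = w x b' \<and> w y x = w b' x" using md[OF x yS bS] by simp
      moreover have "w x b' = a \<and> w b' x = b" using HY[OF xX C(4)] .
      ultimately show "w x y = a \<and> w y x = b" by simp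
    qed
    have eq: "V - (V - S) = S" using SV by auto
    have ne1: "V - S \<noteq> {}" using SV by auto
    have "sp w V" using sp_intro[of w "V - S" V] hm eq ne1 s by auto
    then show False using nsp by blast
  qed
  ultimately show False by blast
qed

lemma ext_unif:
  assumes nsp: "\<not> sp w T" and y: "y \<notin> T" and sp: "sp w (insert y T)" and T: "T \<noteq> {}"
  shows "\<forall>t1\<in>T. \<forall>t2\<in>T. w y t1 = w y t2 \<and> w t1 y = w t2 y"
proof -
  obtain X a b where X: "X \<subseteq> insert y T" "X \<noteq> {}" "insert y T - X \<noteq> {}"
    and H: "\<And>x z. x \<in> X \<Longrightarrow> z \<in> insert y T - X \<Longrightarrow> w x z = a \<and> w z x = b"
    using sp unfolding sp_def hom_def by blast
  consider (split) "X \<inter> T \<noteq> {}" "T - X \<noteq> {}" | (l) "X \<inter> T = {}" | (r) "T \<subseteq> X" by blast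
  then show ?thesis
  proof cases
    case split
    have hm: "hom w (X \<inter> T) (T - (X \<inter> T))" unfolding hom_def
    proof (intro exI ballI)
      fix x z assume xz: "x \<in> X \<inter> T" "z \<in> T - (X \<inter> T)"
      then have "x \<in> X" "z \<in> insert y T - X" by auto
      then show "w x z = a \<and> w z x = b" by (rule H)
    qed
    have "T - (X \<inter> T) \<noteq> {}" using split by auto
    then have "sp w T" using sp_intro[OF hm] split by auto
    then show ?thesis using nsp by blast
  next
    case l
    then have yX: "y \<in> X" using X by auto
    have "\<And>t. t \<in> T \<Longrightarrow> w y t = a \<and> w t y = b"
    proof -
      fix t assume t: "t \<in> T"
      then have "t \<in> insert y T - X" using l by auto
      then show "w y t = a \<and> w t y = b" using H[OF yX] by simp
    qed
    then show ?thesis by simp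
  next
    case r
    then have yX: "y \<notin> X" using X y by auto
    have "\<And>t. t \<in> T \<Longrightarrow> w y t = b \<and> w t y = a"
    proof -
      fix t assume t: "t \<in> T"
      then have "t \<in> X" using r by auto
      moreover have "y \<in> insert y T - X" using yX by simp
      ultimately show "w y t = b \<and> w t y = a" using H by simp
    qed
    then show ?thesis by simp
  qed
qed

lemma ext_good:
  assumes fin: "finite V" and nsp: "\<not> sp w V"
  shows "T \<subseteq> V \<Longrightarrow> T \<noteq> V \<Longrightarrow> \<not> sp w T \<Longrightarrow> card T \<ge> 2 \<Longrightarrow> \<exists>v\<in>V. \<not> sp w (V - {v})"
proof (induction "card (V - T)" arbitrary: T rule: less_induct)
  case less
  have finT: "finite T" using finite_subset[OF less.prems(1) fin] .
  have Tne: "T \<noteq> {}" using less.prems(4) by auto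
  show ?case
  proof (cases "\<exists>y\<in>V - T. \<not> sp w (insert y T)")
    case True
    then obtain y where y: "y \<in> V - T" "\<not> sp w (insert y T)" by blast
    show ?thesis
    proof (cases "insert y T = V")
      case True
      then have "V - {y} = T" using y by auto
      then show ?thesis using y less.prems(3) by auto
    next
      case False
      have lt: "card (V - insert y T) < card (V - T)"
      proof -
        have "V - insert y T = (V - T) - {y}" by auto
        moreover have "card ((V - T) - {y}) < card (V - T)"
          using card_Diff1_less[OF finite_Diff[OF fin] y(1)] .
        ultimately show ?thesis by simp
      qed
      have c2: "card (insert y T) \<ge> 2" using less.prems(4) finT y by simp
      have sub: "insert y T \<subseteq> V" using y less.prems(1) by auto
      show ?thesis using less.hyps[OF lt sub False y(2) c2] .
    qed
  next
    case False
    have md: "w y s1 = w y s2 \<and> w s1 y = w s2 y" if yy: "y \<in> V - T" and s12: "s1 \<in> T" "s2 \<in> T" for y s1 s2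
    proof -
      have spy: "sp w (insert y T)" using False yy by blast
      have yT: "y \<notin> T" using yy by simp
      have "\<forall>t1\<in>T. \<forall>t2\<in>T. w y t1 = w y t2 \<and> w t1 y = w t2 y"
        using ext_unif[OF less.prems(3) yT spy Tne] .
      then show ?thesis using s12 by blast
    qed
    obtain s where s: "s \<in> T" using Tne by blast
    have "card (T - {s}) \<ge> 1" using less.prems(4) s finT by simp
    then have "T - {s} \<noteq> {}"
    proof (intro notI)
      assume "T - {s} = {}"
      then have "T = {s}" using s by blast
      then show False using less.prems(4) by simp
    qed
    then obtain s' where "s' \<in> T - {s}" by blast
    then have ss: "s \<in> T" "s' \<in> T" "s' \<noteq> s" using s by auto
    have "\<not> sp w (V - {s})"
      using clan_good[OF nsp less.prems(1,2) md ss] .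
    then show ?thesis using ss less.prems(1) by blast
  qed
qed

lemma core:
  assumes nsp: "\<not> sp w V" and v: "v \<in> V" and spv: "sp w (V - {v})"
  shows "\<exists>T \<subseteq> V. \<not> sp w T \<and> 3 \<le> card T \<and> card T \<le> 4"
proof -
  obtain X a b where X: "X \<subseteq> V - {v}" "X \<noteq> {}" "V - {v} - X \<noteq> {}"
    and H0: "\<And>x y. x \<in> X \<Longrightarrow> y \<in> V - {v} - X \<Longrightarrow> w x y = a \<and> w y x = b"
    using spv unfolding sp_def hom_def by blast
  define Y where "Y = V - {v} - X"
  have H: "\<And>x y. x \<in> X \<Longrightarrow> y \<in> Y \<Longrightarrow> w x y = a \<and> w y x = b" using H0 Y_def by blast
  have Yne: "Y \<noteq> {}" using X Y_def by blast
  have XY: "X \<inter> Y = {}" "v \<notin> X" "v \<notin> Y" "X \<subseteq> V" "Y \<subseteq> V" using X Y_def by blast+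
  have VXY: "V = insert v (X \<union> Y)" using X Y_def v by blast
  have hx: "\<exists>x\<in>X. \<not> (w x v = a \<and> w v x = b)"
  proof (rule ccontr)
    assume "\<not> ?thesis"
    then have A: "\<And>x. x \<in> X \<Longrightarrow> w x v = a \<and> w v x = b" by blast
    have "\<forall>x\<in>X. \<forall>y\<in>V - X. w x y = a \<and> w y x = b"
    proof (intro ballI)
      fix x y assume x: "x \<in> X" and y: "y \<in> V - X"
      then have "y = v \<or> y \<in> Y" using VXY by blast
      then show "w x y = a \<and> w y x = b" using A[OF x] H[OF x] by blast
    qed
    then have "hom w X (V - X)" unfolding hom_def by blast
    moreover have "V - X \<noteq> {}" using v XY by blast
    ultimately have "sp w V" using X XY by (metis sp_intro)
    then show False using nsp by blast
  qed
  have hy: "\<exists>y\<in>Y. \<not> (w v y = a \<and> w y v = b)"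
  proof (rule ccontr)
    assume "\<not> ?thesis"
    then have A: "\<And>y. y \<in> Y \<Longrightarrow> w v y = a \<and> w y v = b" by blast
    have "\<forall>x\<in>insert v X. \<forall>y\<in>V - insert v X. w x y = a \<and> w y x = b"
    proof (intro ballI)
      fix x y assume x: "x \<in> insert v X" and y: "y \<in> V - insert v X"
      then have yY: "y \<in> Y" using VXY by blast
      from x have "x = v \<or> x \<in> X" by blast
      then show "w x y = a \<and> w y x = b" using A[OF yY] H[OF _ yY] by blast
    qed
    then have "hom w (insert v X) (V - insert v X)" unfolding hom_def by blast
    moreover have "V - insert v X \<noteq> {}" using Yne VXY XY by blast
    moreover have "insert v X \<subseteq> V" "insert v X \<noteq> {}" using X XY v by blast+
    ultimately have "sp w V" by (metis sp_intro)
    then show False using nsp by blast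
  qed
  obtain x1 where x1: "x1 \<in> X" "\<not> (w x1 v = a \<and> w v x1 = b)" using hx by blast
  obtain y1 where y1: "y1 \<in> Y" "\<not> (w v y1 = a \<and> w y1 v = b)" using hy by blast
  show ?thesis
  proof (cases "\<exists>x\<in>X. \<exists>y\<in>Y. \<not> (w x v = a \<and> w v x = b) \<and> \<not> (w v y = a \<and> w y v = b)
                  \<and> \<not> (w v x = w v y \<and> w x v = w y v)")
    case True
    then obtain x y where xy: "x \<in> X" "y \<in> Y" "\<not> (w x v = a \<and> w v x = b)"
      "\<not> (w v y = a \<and> w y v = b)" "\<not> (w v x = w v y \<and> w x v = w y v)" by blast
    have d: "x \<noteq> v" "x \<noteq> y" "v \<noteq> y" using xy XY by blast+
    have Hxy: "w x y = a" "w y x = b" using H xy by blast+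
    have "\<not> sp w {x, v, y}"
      by (rule triple_insep) (use d xy Hxy in auto)
    moreover have "card {x, v, y} = 3" using d by simp
    moreover have "{x, v, y} \<subseteq> V" using xy XY v by blast
    ultimately show ?thesis by (intro exI[of _ "{x, v, y}"]) simp
  next
    case False
    then have H2: "\<And>x y. x \<in> X \<Longrightarrow> y \<in> Y \<Longrightarrow> \<not> (w x v = a \<and> w v x = b) \<Longrightarrow>
        \<not> (w v y = a \<and> w y v = b) \<Longrightarrow> w v x = w v y \<and> w x v = w y v" by blast
    show ?thesis
    proof (cases "\<exists>x'\<in>X. w x' v = a \<and> w v x' = b")
      case True
      show ?thesis
      proof (cases "\<exists>x'\<in>X. \<exists>x1'\<in>X. w x' v = a \<and> w v x' = b \<and> \<not> (w x1' v = a \<and> w v x1' = b)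
                        \<and> \<not> (w x' x1' = a \<and> w x1' x' = b)")
        case True
        then obtain e aa where e: "e \<in> X" "aa \<in> X" "w e v = a" "w v e = b"
          "\<not> (w aa v = a \<and> w v aa = b)" "\<not> (w e aa = a \<and> w aa e = b)" by blast
        have d: "aa \<noteq> y1" "aa \<noteq> v" "aa \<noteq> e" "y1 \<noteq> v" "y1 \<noteq> e" "v \<noteq> e"
          using e y1 XY by blast+
        have Ha: "w aa y1 = a" "w y1 aa = b" using H e y1 by blast+
        have He: "w e y1 = a" "w y1 e = b" using H e y1 by blast+
        have Hv: "w v aa = w v y1 \<and> w aa v = w y1 v" using H2 e y1 by blast
        have "\<not> sp w {aa, y1, v, e}"
          by (rule four_insep) (use d e y1 Ha He Hv in auto)
        moreover have "card {aa, y1, v, e} = 4" using d by simp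
        moreover have "{aa, y1, v, e} \<subseteq> V" using e y1 XY v by blast
        ultimately show ?thesis by (intro exI[of _ "{aa, y1, v, e}"]) simp
      next
        case False
        define X0 where "X0 = {x\<in>X. w x v = a \<and> w v x = b}"
        have "hom w X0 (V - X0)" unfolding hom_def
        proof (rule exI[of _ a], rule exI[of _ b], intro ballI)
          fix x z assume x: "x \<in> X0" and z: "z \<in> V - X0"
          have z': "z = v \<or> z \<in> Y \<or> (z \<in> X \<and> \<not> (w z v = a \<and> w v z = b))"
            using z VXY X0_def by blast
          have xx: "x \<in> X" "w x v = a" "w v x = b" using x X0_def by auto
          consider (c1) "z = v" | (c2) "z \<in> Y" | (c3) "z \<in> X" "\<not> (w z v = a \<and> w v z = b)"
            using z' by blast
          then show "w x z = a \<and> w z x = b"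
          proof cases
            case c1 then show ?thesis using xx by simp
          next
            case c2 then show ?thesis using H xx by blast
          next
            case c3 show ?thesis using False xx c3 by blast
          qed
        qed
        moreover have "X0 \<subseteq> V" "X0 \<noteq> {}" "V - X0 \<noteq> {}" using True X0_def XY v by blast+
        ultimately have "sp w V" by (metis sp_intro)
        then show ?thesis using nsp by blast
      qed
    next
      case noX: False
      show ?thesis
      proof (cases "\<exists>y'\<in>Y. w v y' = a \<and> w y' v = b")
        case True
        show ?thesis
        proof (cases "\<exists>y'\<in>Y. \<exists>y1'\<in>Y. w v y' = a \<and> w y' v = b \<and> \<not> (w v y1' = a \<and> w y1' v = b)
                          \<and> \<not> (w y1' y' = a \<and> w y' y1' = b)")
          case True
          then obtain e bb where e: "e \<in> Y" "bb \<in> Y" "w v e = a" "w e v = b"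
            "\<not> (w v bb = a \<and> w bb v = b)" "\<not> (w bb e = a \<and> w e bb = b)" by blast
          have d: "x1 \<noteq> bb" "x1 \<noteq> v" "x1 \<noteq> e" "bb \<noteq> v" "bb \<noteq> e" "v \<noteq> e"
            using e x1 XY by blast+
          have Hb: "w x1 bb = a" "w bb x1 = b" using H e x1 by blast+
          have He: "w x1 e = a" "w e x1 = b" using H e x1 by blast+
          have Hv: "w v x1 = w v bb \<and> w x1 v = w bb v" using H2 e x1 by blast
          have "\<not> sp w {x1, bb, v, e}"
            by (rule four_insep) (use d e x1 Hb He Hv in auto)
          moreover have "card {x1, bb, v, e} = 4" using d by simp
          moreover have "{x1, bb, v, e} \<subseteq> V" using e x1 XY v by blast
          ultimately show ?thesis by (intro exI[of _ "{x1, bb, v, e}"]) simp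
        next
          case False
          define Y0 where "Y0 = {y\<in>Y. w v y = a \<and> w y v = b}"
          have "hom w (V - Y0) (V - (V - Y0))" unfolding hom_def
          proof (rule exI[of _ a], rule exI[of _ b], intro ballI)
            fix x z assume x: "x \<in> V - Y0" and z: "z \<in> V - (V - Y0)"
            have zz: "z \<in> Y0" using z Y0_def XY by blast
            have x': "x = v \<or> x \<in> X \<or> (x \<in> Y \<and> \<not> (w v x = a \<and> w x v = b))"
              using x VXY Y0_def by blast
            have zz': "z \<in> Y" "w v z = a" "w z v = b" using zz Y0_def by auto
            consider (c1) "x = v" | (c2) "x \<in> X" | (c3) "x \<in> Y" "\<not> (w v x = a \<and> w x v = b)"
              using x' by blast
            then show "w x z = a \<and> w z x = b"
            proof cases
              case c1 then show ?thesis using zz' by simp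
            next
              case c2 then show ?thesis using H zz' by blast
            next
              case c3 show ?thesis using False zz' c3 by blast
            qed
          qed
          moreover have "V - Y0 \<subseteq> V" "V - Y0 \<noteq> {}" "V - (V - Y0) \<noteq> {}"
            using True Y0_def XY v by blast+
          ultimately have "sp w V" by (metis sp_intro)
          then show ?thesis using nsp by blast
        qed
      next
        case noY: False
        have "hom w {v} (V - {v})" unfolding hom_def
        proof (rule exI[of _ "w v y1"], rule exI[of _ "w y1 v"], intro ballI)
          fix x z assume x: "x \<in> {v}" and z: "z \<in> V - {v}"
          have "z \<in> X \<or> z \<in> Y" using z VXY by blast
          then show "w x z = w v y1 \<and> w z x = w y1 v"
          proof
            assume zX: "z \<in> X"
            show ?thesis using H2[OF zX y1(1)] noX zX y1 x by blast
          next
            assume zY: "z \<in> Y"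
            have A1: "w v x1 = w v z \<and> w x1 v = w z v" using H2[OF x1(1) zY] noX noY x1 zY by blast
            have A2: "w v x1 = w v y1 \<and> w x1 v = w y1 v" using H2[OF x1(1) y1(1)] x1 y1 by blast
            show ?thesis using A1 A2 x by simp
          qed
        qed
        moreover have "V - {v} \<noteq> {}" using Yne XY by blast
        moreover have "{v} \<subseteq> V" "{v} \<noteq> {}" using v by auto
        ultimately have "sp w V" by (metis sp_intro)
        then show ?thesis using nsp by blast
      qed
    qed
  qed
qed

lemma clan_pair:
  assumes wg: "wog Z w" and cl: "clan Z w X" and y: "y \<in> Z - X" and x: "x1 \<in> X" "x2 \<in> X"
  shows "w x1 y = w x2 y \<and> w y x1 = w y x2"
proof -
  have anti: "\<And>p q. w p q \<noteq> 0 \<Longrightarrow> w q p = 0" using wg unfolding wog_def by blast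
  from cl y have
    "(\<forall>t\<in>X. w y t = 0 \<and> w t y = 0) \<or> (\<exists>\<alpha>. \<alpha> \<noteq> 0 \<and> (\<forall>t\<in>X. w y t = \<alpha>)) \<or>
     (\<exists>\<alpha>. \<alpha> \<noteq> 0 \<and> (\<forall>t\<in>X. w t y = \<alpha>))"
    unfolding clan_def by blast
  then consider (n) "\<forall>t\<in>X. w y t = 0 \<and> w t y = 0"
    | (o) \<alpha> where "\<alpha> \<noteq> 0" "\<forall>t\<in>X. w y t = \<alpha>"
    | (i) \<alpha> where "\<alpha> \<noteq> 0" "\<forall>t\<in>X. w t y = \<alpha>" by blast
  then show ?thesis
  proof cases
    case n then show ?thesis using x by simp
  next
    case (o \<alpha>)
    have 1: "w y x1 = \<alpha>" "w y x2 = \<alpha>" using o x by auto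
    have "w x1 y = 0" "w x2 y = 0" using anti 1 o(1) by auto
    then show ?thesis using 1 by simp
  next
    case (i \<alpha>)
    have 1: "w x1 y = \<alpha>" "w x2 y = \<alpha>" using i x by auto
    have "w y x1 = 0" "w y x2 = 0" using anti 1 i(1) by auto
    then show ?thesis using 1 by simp
  qed
qed

lemma clan_from_unif:
  assumes XZ: "X \<subseteq> Z" and H: "\<And>x z. x \<in> X \<Longrightarrow> z \<in> Z - X \<Longrightarrow> w z x = p \<and> w x z = q"
  shows "clan Z w X"
  unfolding clan_def
proof (intro conjI XZ ballI)
  fix z assume z: "z \<in> Z - X"
  have A: "\<forall>y\<in>X. w z y = p" "\<forall>y\<in>X. w y z = q" using H z by auto
  show "(\<forall>y\<in>X. w z y = 0 \<and> w y z = 0) \<or> (\<exists>\<alpha>. \<alpha> \<noteq> 0 \<and> (\<forall>y\<in>X. w z y = \<alpha>)) \<or>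
        (\<exists>\<alpha>. \<alpha> \<noteq> 0 \<and> (\<forall>y\<in>X. w y z = \<alpha>))"
  proof (cases "p = 0")
    case pz: True
    show ?thesis
    proof (cases "q = 0")
      case True then show ?thesis using A pz by simp
    next
      case False
      then have "\<exists>\<alpha>. \<alpha> \<noteq> 0 \<and> (\<forall>y\<in>X. w y z = \<alpha>)" using A(2) by (intro exI[of _ q]) simp
      then show ?thesis by blast
    qed
  next
    case False
    then have "\<exists>\<alpha>. \<alpha> \<noteq> 0 \<and> (\<forall>y\<in>X. w z y = \<alpha>)" using A(1) by (intro exI[of _ p]) simp
    then show ?thesis by blast
  qed
qed

lemma sep_iff:
  assumes wg: "wog Z w"
  shows "separable Z w \<longleftrightarrow> sp w Z"
proof
  assume "separable Z w"
  then obtain X Y where XY: "X \<noteq> {}" "Y \<noteq> {}" "X \<inter> Y = {}" "X \<union> Y = Z" "clan Z w X" "clan Z w Y"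
    unfolding separable_def by blast
  have Y: "Y = Z - X" using XY by blast
  obtain x0 y0 where x0: "x0 \<in> X" and y0: "y0 \<in> Y" using XY by blast
  have "\<forall>x\<in>X. \<forall>y\<in>Z - X. w x y = w x0 y0 \<and> w y x = w y0 x0"
  proof (intro ballI)
    fix x y assume x: "x \<in> X" and y: "y \<in> Z - X"
    have "w x y = w x0 y \<and> w y x = w y x0" using clan_pair[OF wg XY(5) y x x0] .
    moreover have x0Y: "x0 \<in> Z - Y" using x0 XY by blast
    moreover have yY: "y \<in> Y" using y Y by blast
    moreover have "w y x0 = w y0 x0 \<and> w x0 y = w x0 y0"
      using clan_pair[OF wg XY(6) x0Y yY y0] .
    ultimately show "w x y = w x0 y0 \<and> w y x = w y0 x0" by simp
  qed
  then have "hom w X (Z - X)" unfolding hom_def by blast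
  moreover have "X \<subseteq> Z" "Z - X \<noteq> {}" using XY Y by blast+
  ultimately show "sp w Z" using XY(1) by (metis sp_intro)
next
  assume "sp w Z"
  then obtain X a b where X: "X \<subseteq> Z" "X \<noteq> {}" "Z - X \<noteq> {}"
    and H: "\<And>x y. x \<in> X \<Longrightarrow> y \<in> Z - X \<Longrightarrow> w x y = a \<and> w y x = b"
    unfolding sp_def hom_def by blast
  have c1: "clan Z w X"
    by (rule clan_from_unif[OF X(1), of w b a]) (use H in blast)
  have c2: "clan Z w (Z - X)"
  proof (rule clan_from_unif[of "Z - X" Z w a b])
    show "Z - X \<subseteq> Z" by blast
  next
    fix x z assume x: "x \<in> Z - X" and z: "z \<in> Z - (Z - X)"
    then have "z \<in> X" by blast
    then show "w z x = a \<and> w x z = b" using H x by blast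
  qed
  have sepX: "X \<noteq> {} \<and> Z - X \<noteq> {} \<and> X \<inter> (Z - X) = {} \<and> X \<union> (Z - X) = Z \<and> clan Z w X \<and> clan Z w (Z - X)"
    using X c1 c2 by blast
  show "separable Z w" unfolding separable_def
    by (rule exI[of _ X], rule exI[of _ "Z - X"], rule sepX)
qed

lemma wog_induced:
  assumes "wog V w" shows "wog (V - {v}) (induced (V - {v}) w)"
proof -
  have fin: "finite V" and P: "\<And>x y. w x y \<noteq> 0 \<Longrightarrow> x \<in> V \<and> y \<in> V \<and> x \<noteq> y \<and> 1/2 < w x y \<and> w x y \<le> 1 \<and> w y x = 0"
    using assms unfolding wog_def by blast+
  show ?thesis unfolding wog_def
  proof (rule conjI)
    show "finite (V - {v})" using fin by simp
  next
    show "\<forall>x y. induced (V - {v}) w x y \<noteq> 0 \<longrightarrow> x \<in> V - {v} \<and> y \<in> V - {v} \<and> x \<noteq> y \<and>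
      1 / 2 < induced (V - {v}) w x y \<and> induced (V - {v}) w x y \<le> 1 \<and> induced (V - {v}) w y x = 0"
    proof (intro allI impI)
    fix x y assume h: "induced (V - {v}) w x y \<noteq> 0"
    have xy: "x \<in> V - {v}" "y \<in> V - {v}"
      using h unfolding induced_def by (meson)+
    have e1: "induced (V - {v}) w x y = w x y" "induced (V - {v}) w y x = w y x"
      using xy unfolding induced_def by simp_all
    have "w x y \<noteq> 0" using h e1 by simp
    from P[OF this] show "x \<in> V - {v} \<and> y \<in> V - {v} \<and> x \<noteq> y \<and> 1 / 2 < induced (V - {v}) w x y \<and>
          induced (V - {v}) w x y \<le> 1 \<and> induced (V - {v}) w y x = 0"
      using xy e1 by simp
    qed
  qed
qed

lemma hom_cong:
  assumes "\<And>x y. x \<in> X \<Longrightarrow> y \<in> Y \<Longrightarrow> w' x y = w x y \<and> w' y x = w y x"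
  shows "hom w' X Y \<longleftrightarrow> hom w X Y"
proof -
  have "(\<forall>x\<in>X. \<forall>y\<in>Y. w' x y = p \<and> w' y x = q) \<longleftrightarrow> (\<forall>x\<in>X. \<forall>y\<in>Y. w x y = p \<and> w y x = q)" for p q
    using assms by auto
  then show ?thesis unfolding hom_def by simp
qed

lemma sp_induced:
  "sp (induced Z w) Z \<longleftrightarrow> sp w Z"
proof -
  have "hom (induced Z w) X (Z - X) \<longleftrightarrow> hom w X (Z - X)" if "X \<subseteq> Z" for X
    by (rule hom_cong) (use that in \<open>auto simp: induced_def\<close>)
  then show ?thesis unfolding sp_def by blast
qed

lemma main_comb:
  assumes fin: "finite V" and c5: "card V \<ge> 5" and nsp: "\<not> sp w V"
  shows "\<exists>v\<in>V. \<not> sp w (V - {v})"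
proof (rule ccontr)
  assume A: "\<not> ?thesis"
  have "V \<noteq> {}" using c5 by auto
  then obtain v where v: "v \<in> V" by blast
  have "sp w (V - {v})" using A v by blast
  then obtain T where T: "T \<subseteq> V" "\<not> sp w T" "3 \<le> card T" "card T \<le> 4"
    using core[OF nsp v] by blast
  have TV: "T \<noteq> V" using T c5 by auto
  have c2: "card T \<ge> 2" using T by simp
  have "\<exists>v\<in>V. \<not> sp w (V - {v})"
    using ext_good[OF fin nsp T(1) TV T(2) c2] .
  then show False using A by blast
qed

theorem theorem3p3:
  fixes V :: "'a set" and w :: "'a \<Rightarrow> 'a \<Rightarrow> real"
  assumes "wog V w" and "inseparable V w" and "card V \<ge> 5"
  shows "\<exists>v \<in> V. inseparable (V - {v}) (induced (V - {v}) w)"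
proof -
  have fin: "finite V" using assms(1) unfolding wog_def by blast
  have nsp: "\<not> sp w V" using assms(2) sep_iff[OF assms(1)] unfolding inseparable_def by blast
  obtain v where v: "v \<in> V" "\<not> sp w (V - {v})" using main_comb[OF fin assms(3) nsp] by blast
  have "\<not> separable (V - {v}) (induced (V - {v}) w)"
    using sep_iff[OF wog_induced[OF assms(1)], of v] sp_induced[of "V - {v}" w] v(2) by simp
  then show ?thesis using v(1) unfolding inseparable_def by blast
qed

end
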